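(* Consider the online firefighter game on the infinite square grid $\mathbb{L}_2=\mathbb{Z}\times\mathbb{Z}$ (described in the context). There is an online strategy for Player 1 that wins against every firefighter sequence $(f_i)_{i\geq 1}$ revealed by Player 2 for which there exists $N\geq 1$ with $\sum_{i=1}^N f_i\geq 16\cdot N$.
   Context: The grid $\mathbb{L}_2$ has vertex set $\mathbb{Z}\times\mathbb{Z}$, with $(x,y)$ adjacent to $(x',y')$ iff $|x-x'|+|y-y'|=1$. A fire starts at an ignition vertex $v$ at time $0$ (so $v$ is burning). A firefighter sequence is a sequence $(f_i)_{i\geq 1}$ of non-negative integers. At each turn $i\geq 1$: Player 1 chooses at most $f_i$ vertices that are neither burning nor protected and protects them; then the fire spreads from every burning vertex to all of its unprotected neighbours. Once a vertex is burning or protected it remains so forever; unused firefighters are not carried over. Player 2 wins if at every turn some new vertex starts burning; otherwise Player 1 wins (the fire is contained). In the online version the sequence is chosen by Player 2 and revealed turn by turn: at turn $i$ Player 2 reveals $f_i$ to Player 1 just before Player 1 places firefighters, so an online strategy of Player 1 chooses its moves at turn $i$ based only on $f_1,\dots,f_i$ and the history of the game so far (in particular without knowing $N$ in advance). *)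

theory Defs
  imports Main
begin

type_synonym vertex = "int \<times> int"

text \<open>A (deterministic) online strategy of Player 1: given the ignition vertex and the
  revealed prefix [f 1, ..., f i] of the firefighter sequence, it returns the set of
  vertices to protect at turn i. (The rest of the history is determined by these data.)\<close>
type_synonym strategy = "vertex \<Rightarrow> nat list \<Rightarrow> vertex set"

definition adj :: "vertex \<Rightarrow> vertex \<Rightarrow> bool" where
  "adj p q \<longleftrightarrow> \<bar>fst p - fst q\<bar> + \<bar>snd p - snd q\<bar> = 1"

definition spread :: "vertex set \<Rightarrow> vertex set \<Rightarrow> vertex set" where
  "spread B P = B \<union> {w. w \<notin> P \<and> (\<exists>u\<in>B. adj u w)}"

definition move :: "vertex \<Rightarrow> strategy \<Rightarrow> (nat \<Rightarrow> nat) \<Rightarrow> nat \<Rightarrow> vertex set" where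
  "move v \<sigma> f i = \<sigma> v (map f [1..<Suc i])"

fun play :: "vertex \<Rightarrow> strategy \<Rightarrow> (nat \<Rightarrow> nat) \<Rightarrow> nat \<Rightarrow> vertex set \<times> vertex set" where
  "play v \<sigma> f 0 = ({v}, {})"
| "play v \<sigma> f (Suc i) =
     (let B = fst (play v \<sigma> f i);
          P' = snd (play v \<sigma> f i) \<union> move v \<sigma> f (Suc i)
      in (spread B P', P'))"

definition legal :: "vertex \<Rightarrow> strategy \<Rightarrow> (nat \<Rightarrow> nat) \<Rightarrow> nat \<Rightarrow> bool" where
  "legal v \<sigma> f i \<longleftrightarrow>
     (let S = move v \<sigma> f i; B = fst (play v \<sigma> f (i - 1)); P = snd (play v \<sigma> f (i - 1))
      in finite S \<and> card S \<le> f i \<and> S \<inter> (B \<union> P) = {})"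

definition P1_wins :: "vertex \<Rightarrow> strategy \<Rightarrow> (nat \<Rightarrow> nat) \<Rightarrow> bool" where
  "P1_wins v \<sigma> f \<longleftrightarrow>
     (\<exists>n\<ge>1. (\<forall>i\<in>{1..n}. legal v \<sigma> f i) \<and> fst (play v \<sigma> f n) = fst (play v \<sigma> f (n - 1)))"

end

theory Submission
  imports Defs
begin

definition LL :: "nat \<Rightarrow> nat" where "LL r = 4*r+2"

fun stf :: "(nat \<Rightarrow> nat) \<Rightarrow> nat \<Rightarrow> nat \<times> nat" where
  "stf f 0 = (0,0)"
| "stf f (Suc i) = (let r = fst (stf f i); c = snd (stf f i);
      r' = (if r < Suc i then 2 * Suc i else r); c0 = (if r < Suc i then 0 else c)
    in (r', min (c0 + f (Suc i)) (LL r')))"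

definition cz :: "(nat \<Rightarrow> nat) \<Rightarrow> nat \<Rightarrow> nat" where
  "cz f i = (if fst (stf f (i-1)) < i then 0 else snd (stf f (i-1)))"

definition dd :: "vertex \<Rightarrow> vertex \<Rightarrow> int" where
  "dd v p = \<bar>fst p - fst v\<bar> + \<bar>snd p - snd v\<bar>"

definition pt :: "vertex \<Rightarrow> nat \<Rightarrow> nat \<Rightarrow> vertex" where
  "pt v r k = (if k < 2*r+1 then (fst v + (int k - int r), snd v + (int r - \<bar>int k - int r\<bar>))
     else (fst v + (int (k - (2*r+1)) - int r), snd v + (\<bar>int (k - (2*r+1)) - int r\<bar> - int r)))"

definition slots :: "vertex \<Rightarrow> (nat \<Rightarrow> nat) \<Rightarrow> nat \<Rightarrow> vertex set" where
  "slots v f i = pt v (fst (stf f i)) ` {cz f i..<snd (stf f i)}"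

fun Pf :: "vertex \<Rightarrow> (nat \<Rightarrow> nat) \<Rightarrow> nat \<Rightarrow> vertex set" where
  "Pf v f 0 = {}"
| "Pf v f (Suc i) = Pf v f i \<union> slots v f (Suc i)"

definition mv :: "vertex \<Rightarrow> (nat \<Rightarrow> nat) \<Rightarrow> nat \<Rightarrow> vertex set" where
  "mv v f i = (if i = 0 then {} else slots v f i - Pf v f (i-1))"

definition strat :: strategy where
  "strat v xs = mv v (\<lambda>j. xs ! (j - 1)) (length xs)"

lemma stf_Suc: "stf f (Suc i) = (if fst (stf f i) < Suc i then 2 * Suc i else fst (stf f i),
   min (cz f (Suc i) + f (Suc i)) (LL (if fst (stf f i) < Suc i then 2 * Suc i else fst (stf f i))))"
  by (simp add: cz_def Let_def)

declare stf.simps(2)[simp del]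

lemma stf_cong: "(\<And>j. 1 \<le> j \<Longrightarrow> j \<le> i \<Longrightarrow> g j = f j) \<Longrightarrow> stf g i = stf f i"
proof (induction i)
  case 0 then show ?case by simp
next
  case (Suc i)
  then have "stf g i = stf f i" by simp
  moreover have "g (Suc i) = f (Suc i)" using Suc by simp
  ultimately show ?case by (simp add: stf.simps(2) Let_def)
qed

lemma cz_cong: "(\<And>j. 1 \<le> j \<Longrightarrow> j \<le> i \<Longrightarrow> g j = f j) \<Longrightarrow> cz g i = cz f i"
  unfolding cz_def using stf_cong[of "i-1" g f] by simp

lemma slots_cong: "(\<And>j. 1 \<le> j \<Longrightarrow> j \<le> i \<Longrightarrow> g j = f j) \<Longrightarrow> slots v g i = slots v f i"
  unfolding slots_def using stf_cong[of i g f] cz_cong[of i g f] by simp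

lemma Pf_cong: "(\<And>j. 1 \<le> j \<Longrightarrow> j \<le> i \<Longrightarrow> g j = f j) \<Longrightarrow> Pf v g i = Pf v f i"
proof (induction i)
  case 0 then show ?case by simp
next
  case (Suc i)
  then show ?case using slots_cong[of "Suc i" g f v] by simp
qed

lemma mv_cong: "(\<And>j. 1 \<le> j \<Longrightarrow> j \<le> i \<Longrightarrow> g j = f j) \<Longrightarrow> mv v g i = mv v f i"
  unfolding mv_def using slots_cong[of i g f v] Pf_cong[of "i-1" g f v] by simp

lemma move_eq: "move v strat f i = mv v f i"
proof -
  have "mv v (\<lambda>j. map f [1..<Suc i] ! (j - 1)) i = mv v f i"
    by (rule mv_cong) (simp del: upt_Suc add: nth_map_upt)
  then show ?thesis by (simp del: upt_Suc add: move_def strat_def)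
qed

lemma play_snd: "snd (play v strat f i) = Pf v f i"
  by (induction i) (auto simp: Let_def move_eq mv_def)

lemma adj_dd: "adj u w \<Longrightarrow> dd v w \<le> dd v u + 1"
  unfolding adj_def dd_def by arith

lemma play_fst_ball: "fst (play v strat f i) \<subseteq> {p. dd v p \<le> int i}"
proof (induction i)
  case 0 then show ?case by (simp add: dd_def)
next
  case (Suc i)
  then show ?case by (auto simp: Let_def spread_def dest!: adj_dd[where v=v])
qed

lemma stf_ge: "1 \<le> i \<Longrightarrow> i \<le> fst (stf f i)"
  by (cases i) (auto simp: stf_Suc)

lemma stf_le: "1 \<le> i \<Longrightarrow> snd (stf f i) \<le> LL (fst (stf f i)) \<and> snd (stf f i) \<le> cz f i + f i"
  by (cases i) (auto simp: stf_Suc)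

lemma pt_dist: "k < LL r \<Longrightarrow> dd v (pt v r k) = int r"
  unfolding pt_def dd_def LL_def by auto

lemma pt_surj: assumes "dd v p = int r" shows "p \<in> pt v r ` {0..<LL r}"
proof -
  define x where "x = fst p - fst v"
  define y where "y = snd p - snd v"
  have h: "\<bar>x\<bar> + \<bar>y\<bar> = int r" using assms by (simp add: dd_def x_def y_def)
  show ?thesis
  proof (cases "y \<ge> 0")
    case True
    define k where "k = nat (x + int r)"
    have "k < 2*r+1" using h by (simp add: k_def)
    moreover have "pt v r k = p" using h True unfolding pt_def k_def x_def y_def
      by (auto simp: prod_eq_iff)
    ultimately show ?thesis unfolding LL_def by force
  next
    case False
    define k where "k = 2*r+1 + nat (x + int r)"
    have "k < LL r" using h by (simp add: k_def LL_def)
    moreover have "pt v r k = p" using h False unfolding pt_def k_def x_def y_def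
      by (auto simp: prod_eq_iff)
    ultimately show ?thesis by force
  qed
qed


lemma Pf_mono: "i \<le> j \<Longrightarrow> Pf v f i \<subseteq> Pf v f j"
  by (induction j) (auto simp: le_Suc_eq)

lemma ring_in_Pf: "1 \<le> i \<Longrightarrow> pt v (fst (stf f i)) ` {0..<snd (stf f i)} \<subseteq> Pf v f i"
proof (induction i)
  case 0 then show ?case by simp
next
  case (Suc i)
  show ?case
  proof (cases "cz f (Suc i) = 0")
    case True
    then show ?thesis by (auto simp: slots_def)
  next
    case False
    then have nl: "\<not> fst (stf f i) < Suc i" by (auto simp: cz_def)
    then have i1: "1 \<le> i" by (cases i) auto
    have r: "fst (stf f (Suc i)) = fst (stf f i)" by (simp add: stf_Suc nl)
    have c: "cz f (Suc i) = snd (stf f i)" by (simp add: cz_def nl)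
    have "{0..<snd (stf f (Suc i))} \<subseteq> {0..<snd (stf f i)} \<union> {cz f (Suc i)..<snd (stf f (Suc i))}"
      using c by auto
    then have "pt v (fst (stf f i)) ` {0..<snd (stf f (Suc i))} \<subseteq>
       pt v (fst (stf f i)) ` {0..<snd (stf f i)} \<union> pt v (fst (stf f i)) ` {cz f (Suc i)..<snd (stf f (Suc i))}"
      by blast
    then show ?thesis using Suc.IH[OF i1] r by (simp add: slots_def) blast
  qed
qed

lemma legal_all: "1 \<le> i \<Longrightarrow> legal v strat f i"
proof -
  assume i1: "1 \<le> i"
  have fin: "finite (mv v f i)" using i1 by (simp add: mv_def slots_def)
  have "card (mv v f i) \<le> card (slots v f i)"
    using i1 by (auto simp: mv_def slots_def intro: card_mono)
  also have "\<dots> \<le> card {cz f i..<snd (stf f i)}" unfolding slots_def by (rule card_image_le) simp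
  also have "\<dots> \<le> f i" using stf_le[OF i1, of f] by (simp only: card_atLeastLessThan) linarith
  finally have cd: "card (mv v f i) \<le> f i" .
  have "mv v f i \<inter> fst (play v strat f (i-1)) = {}"
  proof -
    { fix p assume p: "p \<in> mv v f i" "p \<in> fst (play v strat f (i-1))"
      then obtain k where k: "k < snd (stf f i)" "p = pt v (fst (stf f i)) k"
        using i1 by (auto simp: mv_def slots_def)
      have "k < LL (fst (stf f i))" using k(1) stf_le[OF i1, of f] by linarith
      then have "dd v p = int (fst (stf f i))" using k pt_dist by simp
      moreover have "dd v p \<le> int (i-1)" using p(2) play_fst_ball by blast
      ultimately have False using stf_ge[OF i1, of f] i1 by simp }
    then show ?thesis by blast
  qed
  moreover have "mv v f i \<inter> snd (play v strat f (i-1)) = {}"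
    using i1 by (auto simp: play_snd mv_def)
  ultimately show ?thesis using fin cd by (auto simp: legal_def move_eq Let_def)
qed

lemma budget: "1 \<le> i \<Longrightarrow> (\<exists>j\<in>{1..i}. snd (stf f j) = LL (fst (stf f j))) \<or>
   (fst (stf f i) \<le> 2*i \<and> snd (stf f i) < LL (fst (stf f i)) \<and>
    (\<Sum>k=1..i. f k) + 8 \<le> snd (stf f i) + 4 * fst (stf f i))"
proof (induction i)
  case 0 then show ?case by simp
next
  case (Suc i)
  show ?case
  proof (cases "snd (stf f (Suc i)) = LL (fst (stf f (Suc i)))")
    case True then show ?thesis by force
  next
    case nc: False
    show ?thesis
    proof (cases "i = 0")
      case True
      then show ?thesis using nc by (auto simp: stf_Suc cz_def LL_def)
    next
      case False
      then have i1: "1 \<le> i" by simp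
      show ?thesis
      proof (cases "\<exists>j\<in>{1..i}. snd (stf f j) = LL (fst (stf f j))")
        case True then show ?thesis by force
      next
        case False
        then have IH: "fst (stf f i) \<le> 2*i \<and> snd (stf f i) < LL (fst (stf f i)) \<and>
          (\<Sum>k=1..i. f k) + 8 \<le> snd (stf f i) + 4 * fst (stf f i)" using Suc.IH i1 by blast
        have ge: "i \<le> fst (stf f i)" using stf_ge[OF i1] .
        have sum: "(\<Sum>k=1..Suc i. f k) = (\<Sum>k=1..i. f k) + f (Suc i)" by simp
        show ?thesis
        proof (cases "fst (stf f i) < Suc i")
          case True
          then show ?thesis using nc IH ge sum by (auto simp: stf_Suc cz_def LL_def)
        next
          case False
          then show ?thesis using nc IH ge sum by (auto simp: stf_Suc cz_def LL_def)
        qed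
      qed
    qed
  qed
qed

lemma stationary:
  fixes B :: "nat \<Rightarrow> 'a set"
  assumes mono: "\<And>n. B n \<subseteq> B (Suc n)" and sub: "\<And>n. n \<ge> m \<Longrightarrow> B n \<subseteq> F" and fin: "finite F"
  shows "\<exists>n>m. B n = B (n - 1)"
proof (rule ccontr)
  assume "\<not> ?thesis"
  then have ne: "\<And>n. n > m \<Longrightarrow> B n \<noteq> B (n-1)" by blast
  have "k \<le> card (B (m+k))" for k
  proof (induction k)
    case 0 then show ?case by simp
  next
    case (Suc k)
    have "B (m+k) \<subset> B (m + Suc k)" using mono[of "m+k"] ne[of "m + Suc k"] by auto
    moreover have "finite (B (m + Suc k))" using sub[of "m + Suc k"] fin finite_subset by auto
    ultimately have "card (B (m+k)) < card (B (m + Suc k))" by (rule psubset_card_mono[rotated])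
    then show ?case using Suc.IH by simp
  qed
  from this[of "card F + 1"] have "card F + 1 \<le> card (B (m + (card F + 1)))" .
  moreover have "card (B (m + (card F + 1))) \<le> card F" using sub fin by (simp add: card_mono)
  ultimately show False by simp
qed


lemma ball_finite: "finite {p. dd v p < int R}"
proof (rule finite_subset)
  show "{p. dd v p < int R} \<subseteq> {fst v - int R..fst v + int R} \<times> {snd v - int R..snd v + int R}"
    by (auto simp: dd_def)
qed simp

lemma contain:
  assumes j1: "1 \<le> j" and full: "snd (stf f j) = LL (fst (stf f j))"
  shows "fst (play v strat f (j - 1 + n)) \<subseteq> {p. dd v p < int (fst (stf f j))}"
proof (induction n)
  case 0
  show ?case using play_fst_ball[of v f "j-1"] stf_ge[OF j1, of f] j1 by force
next
  case (Suc n)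
  define R where "R = fst (stf f j)"
  have ring: "{p. dd v p = int R} \<subseteq> Pf v f (j + n)"
  proof
    fix p assume "p \<in> {p. dd v p = int R}"
    then have "p \<in> pt v R ` {0..<LL R}" using pt_surj by blast
    then have "p \<in> Pf v f j" using ring_in_Pf[OF j1, of v f] full R_def by auto
    then show "p \<in> Pf v f (j + n)" using Pf_mono[of j "j+n" v f] by auto
  qed
  have eq: "j - 1 + Suc n = Suc (j - 1 + n)" using j1 by simp
  have eq2: "Suc (j - 1 + n) = j + n" using j1 by simp
  show ?case
  proof
    fix w assume w: "w \<in> fst (play v strat f (j - 1 + Suc n))"
    show "w \<in> {p. dd v p < int (fst (stf f j))}"
    proof (cases "w \<in> fst (play v strat f (j - 1 + n))")
      case True then show ?thesis using Suc.IH by blast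
    next
      case False
      have "snd (play v strat f (j - 1 + n)) \<union> move v strat f (Suc (j - 1 + n)) = Pf v f (j + n)"
      proof -
        obtain k where k: "k = j - 1 + n" by blast
        have "snd (play v strat f (Suc k)) = snd (play v strat f k) \<union> move v strat f (Suc k)"
          by (simp only: play.simps Let_def snd_conv)
        then show ?thesis using play_snd[of v f "Suc k"] eq2 k by simp
      qed
      then obtain u where u: "u \<in> fst (play v strat f (j - 1 + n))" "adj u w" "w \<notin> Pf v f (j + n)"
        using w False unfolding eq by (auto simp: Let_def spread_def)
      have "dd v u < int R" using u(1) Suc.IH R_def by blast
      moreover have "dd v w \<le> dd v u + 1" using adj_dd[OF u(2)] .
      moreover have "dd v w \<noteq> int R" using ring u(3) by blast
      ultimately show ?thesis using R_def by simp
    qed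
  qed
qed

theorem theorem3:
  shows "\<exists>\<sigma> :: strategy. \<forall>(v :: vertex) (f :: nat \<Rightarrow> nat).
           (\<exists>N\<ge>1. (\<Sum>i=1..N. f i) \<ge> 16 * N) \<longrightarrow> P1_wins v \<sigma> f"
proof (intro exI allI impI)
  fix v :: vertex and f :: "nat \<Rightarrow> nat"
  assume "\<exists>N\<ge>1. (\<Sum>i=1..N. f i) \<ge> 16 * N"
  then obtain N where N1: "N \<ge> 1" and SN: "(\<Sum>i=1..N. f i) \<ge> 16 * N" by blast
  have "\<exists>j\<in>{1..N}. snd (stf f j) = LL (fst (stf f j))"
  proof (rule ccontr)
    assume "\<not> ?thesis"
    then have "fst (stf f N) \<le> 2*N \<and> snd (stf f N) < LL (fst (stf f N)) \<and>
      (\<Sum>k=1..N. f k) + 8 \<le> snd (stf f N) + 4 * fst (stf f N)" using budget[OF N1, of f] by blast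
    then show False using SN by (simp add: LL_def)
  qed
  then obtain j where j1: "1 \<le> j" and full: "snd (stf f j) = LL (fst (stf f j))" by auto
  define B where "B n = fst (play v strat f n)" for n
  have "\<exists>n>j-1. B n = B (n - 1)"
  proof (rule stationary[where F = "{p. dd v p < int (fst (stf f j))}"])
    show "B n \<subseteq> B (Suc n)" for n by (auto simp: B_def Let_def spread_def)
    show "B n \<subseteq> {p. dd v p < int (fst (stf f j))}" if "n \<ge> j - 1" for n
      using contain[OF j1 full, of v "n - (j-1)"] that by (simp add: B_def)
  qed (rule ball_finite)
  then obtain n where n: "n > j - 1" "B n = B (n-1)" by blast
  show "P1_wins v strat f"
    unfolding P1_wins_def using n legal_all by (auto simp: B_def intro!: exI[of _ n])
qed

end
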